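(* Let $G$ be a complete $s$-partite graph ($s\ge 2$), and suppose exactly $r$ of its parts consist of a single vertex. Then $\chi_1(G)=s-r+\left\lceil \frac{r}{2}\right\rceil$.
   Context: A map $f:V(G)\to\{1,\dots,k\}$ is a $1$-relaxed $k$-coloring if every vertex $u$ has at most one neighbor $v$ with $f(v)=f(u)$; $\chi_1(G)$ is the minimum $k$ for which such a coloring exists. *)

theory Defs
  imports Complex_Main
begin

definition relaxed1_coloring ::
  "'a set \<Rightarrow> ('a \<Rightarrow> 'a \<Rightarrow> bool) \<Rightarrow> nat \<Rightarrow> ('a \<Rightarrow> nat) \<Rightarrow> bool" where
  "relaxed1_coloring V E k f \<longleftrightarrow>
     (\<forall>v\<in>V. f v \<in> {1..k}) \<and>
     (\<forall>u\<in>V. \<forall>v\<in>V. \<forall>w\<in>V.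
        E u v \<and> E u w \<and> f v = f u \<and> f w = f u \<longrightarrow> v = w)"

definition chi1 :: "'a set \<Rightarrow> ('a \<Rightarrow> 'a \<Rightarrow> bool) \<Rightarrow> nat" where
  "chi1 V E = (LEAST k. \<exists>f. relaxed1_coloring V E k f)"

definition complete_multipartite ::
  "'a set \<Rightarrow> ('a \<Rightarrow> 'a \<Rightarrow> bool) \<Rightarrow> 'a set set \<Rightarrow> bool" where
  "complete_multipartite V E P \<longleftrightarrow>
     \<Union>P = V \<and> (\<forall>A\<in>P. A \<noteq> {}) \<and> pairwise disjnt P \<and>
     (\<forall>u v. E u v \<longleftrightarrow> (\<exists>A\<in>P. \<exists>B\<in>P. A \<noteq> B \<and> u \<in> A \<and> v \<in> B))"

end

theory Submission
  imports Defs
begin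

lemma cm_facts:
  assumes "complete_multipartite V E P"
  shows "\<Union>P = V" "\<And>A. A\<in>P \<Longrightarrow> A \<noteq> {}"
    "\<And>A B v. A\<in>P \<Longrightarrow> B\<in>P \<Longrightarrow> v\<in>A \<Longrightarrow> v\<in>B \<Longrightarrow> A = B"
    "\<And>u v. E u v \<longleftrightarrow> (\<exists>A\<in>P. \<exists>B\<in>P. A \<noteq> B \<and> u \<in> A \<and> v \<in> B)"
  using assms unfolding complete_multipartite_def
  by (auto simp: disjnt_iff pairwise_def)

lemma lower:
  assumes fin: "finite V" and cm: "complete_multipartite V E P"
    and col: "relaxed1_coloring V E k f"
  shows "2 * card P - card {A\<in>P. card A = 1} \<le> 2 * k"
proof -
  note U = cm_facts(1)[OF cm] and ne = cm_facts(2)[OF cm]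
    and uniq = cm_facts(3)[OF cm] and Eiff = cm_facts(4)[OF cm]
  have finP: "finite P" using fin U finite_UnionD by blast
  have finA: "finite A" if "A \<in> P" for A using fin U that
    by (metis Union_upper finite_subset)
  have AV: "A \<subseteq> V" if "A \<in> P" for A using U that by blast
  have key: "v = w" if H: "A\<in>P" "B\<in>P" "A\<noteq>B" "u\<in>A" "v\<in>B" "w\<in>V" "w\<notin>A"
      "f v = f u" "f w = f u" for A B u v w
  proof -
    obtain D where D: "D \<in> P" "w \<in> D" using U H(6) by blast
    have "D \<noteq> A" using D H(7) by blast
    hence "E u w" using Eiff D H by blast
    moreover have "E u v" using Eiff H by blast
    moreover have "u \<in> V" "v \<in> V" using AV H by blast+
    ultimately show ?thesis using col H unfolding relaxed1_coloring_def by blast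
  qed
  define W where "W c A = (if \<exists>v\<in>V. f v = c \<and> v \<notin> A then 1 else 2::nat)" for c A
  define R where "R c A = (\<exists>v\<in>A. f v = c)" for c A
  have a: "sum (W c) {A\<in>P. R c A} \<le> 2" for c
  proof (cases "\<exists>A B. A \<in> P \<and> B \<in> P \<and> R c A \<and> R c B \<and> A \<noteq> B")
    case True
    then obtain A B where AB: "A \<in> P" "B \<in> P" "R c A" "R c B" "A \<noteq> B" by blast
    then obtain a b where ab: "a \<in> A" "b \<in> B" "f a = c" "f b = c" unfolding R_def by blast
    have PcE: "{A\<in>P. R c A} = {A, B}"
    proof (rule set_eqI, rule iffI)
      fix D assume "D \<in> {A\<in>P. R c A}"
      then obtain d where d: "D \<in> P" "d \<in> D" "f d = c" unfolding R_def by blast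
      show "D \<in> {A, B}"
      proof (rule ccontr)
        assume "D \<notin> {A, B}"
        hence "d \<notin> A" using uniq[of D A d] d AB by blast
        hence "b = d" using key[of A B a b d] AB ab d AV by auto
        thus False using uniq[of D B d] d AB ab \<open>D \<notin> {A, B}\<close> by blast
      qed
    next
      fix D assume "D \<in> {A, B}"
      thus "D \<in> {A\<in>P. R c A}" using AB by blast
    qed
    have "b \<notin> A" using uniq[of A B b] AB ab by blast
    moreover have "b \<in> V" using AV AB ab by blast
    ultimately have WA: "W c A = 1" unfolding W_def using ab by auto
    have "a \<notin> B" using uniq[of A B a] AB ab by blast
    moreover have "a \<in> V" using AV AB ab by blast
    ultimately have WB: "W c B = 1" unfolding W_def using ab by auto
    show ?thesis using AB PcE WA WB by simp
  next
    case False
    show ?thesis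
    proof (cases "{A\<in>P. R c A} = {}")
      case True show ?thesis by (subst True) simp
    next
      case F2: False
      then obtain A where "A \<in> {A\<in>P. R c A}" by blast
      hence "{A\<in>P. R c A} = {A}" using False by blast
      thus ?thesis by (simp add: W_def)
    qed
  qed
  have b: "(if card A = 1 then 1 else 2) \<le> sum (\<lambda>c. W c A) {c\<in>f`V. R c A}"
    if AP: "A \<in> P" for A
  proof -
    have eq: "{c\<in>f`V. R c A} = f`A" unfolding R_def using AV[OF AP] by (auto, metis image_eqI)
    have W1: "1 \<le> W c A" for c by (simp add: W_def)
    have cs: "card (f`A) \<le> sum (\<lambda>c. W c A) (f`A)"
      using sum_mono[of "f`A" "\<lambda>_. 1::nat" "\<lambda>c. W c A"] W1 by simp
    have finfA: "finite (f`A)" using finA[OF AP] by simp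
    have nfA: "f`A \<noteq> {}" using ne[OF AP] by simp
    hence c1: "card (f`A) \<ge> 1" using finfA by (simp add: Suc_leI card_gt_0_iff)
    show ?thesis
    proof (cases "card A = 1")
      case True thus ?thesis using cs c1 eq by simp
    next
      case False
      hence cA: "card A \<ge> 2" using ne[OF AP] finA[OF AP]
        by (metis One_nat_def Suc_1 Suc_leI card_gt_0_iff le_neq_implies_less less_Suc_eq_le not_less_eq_eq)
      show ?thesis
      proof (cases "card (f`A) \<ge> 2")
        case True thus ?thesis using cs eq False by simp
      next
        case F2: False
        hence "card (f`A) = 1" using c1 by simp
        then obtain c where fc: "f`A = {c}" by (metis card_1_singletonE)
        obtain a1 a2 where a12: "a1 \<in> A" "a2 \<in> A" "a1 \<noteq> a2"
          using cA by (metis One_nat_def Suc_1 card_le_Suc0_iff_eq finA[OF AP] not_less_eq_eq)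
        have fa: "f a1 = c" "f a2 = c" using fc a12 by blast+
        have "W c A = 2"
        proof (rule ccontr)
          assume "W c A \<noteq> 2"
          then obtain v where v: "v \<in> V" "f v = c" "v \<notin> A" unfolding W_def by (auto split: if_splits)
          obtain B where B: "B \<in> P" "v \<in> B" using U v by blast
          have "B \<noteq> A" using B v by blast
          have "a2 \<notin> B" using uniq B AP a12 \<open>B \<noteq> A\<close> by blast
          hence "a1 = a2" using key[of B A v a1 a2] B AP \<open>B \<noteq> A\<close> a12 fa v AV by auto
          thus False using a12 by simp
        qed
        thus ?thesis using eq fc by simp
      qed
    qed
  qed
  have finfV: "finite (f`V)" using fin by simp
  have "(\<Sum>A\<in>P. (if card A = 1 then 1 else 2::nat)) \<le> (\<Sum>A\<in>P. sum (\<lambda>c. W c A) {c\<in>f`V. R c A})"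
    by (rule sum_mono) (use b in auto)
  also have "\<dots> = (\<Sum>c\<in>f`V. sum (W c) {A\<in>P. R c A})"
    using sum.swap_restrict[OF finfV finP, of W R] by simp
  also have "\<dots> \<le> (\<Sum>c\<in>f`V. 2)" by (rule sum_mono) (use a in auto)
  also have "\<dots> = 2 * card (f`V)" by simp
  also have "card (f`V) \<le> k"
  proof -
    have "f`V \<subseteq> {1..k}" using col unfolding relaxed1_coloring_def by auto
    thus ?thesis using card_mono[of "{1..k}" "f`V"] by simp
  qed
  hence "2 * card (f`V) \<le> 2 * k" by simp
  finally have s: "(\<Sum>A\<in>P. (if card A = 1 then 1 else 2::nat)) \<le> 2 * k" .
  have "(\<Sum>A\<in>P. (if card A = 1 then 1 else 2::nat)) =
        card {A\<in>P. card A = 1} + 2 * card {A\<in>P. card A \<noteq> 1}"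
    using sum.If_cases[OF finP, of "\<lambda>A. card A = 1" "\<lambda>_. 1::nat" "\<lambda>_. 2"]
    by (simp add: Collect_conj_eq Collect_neg_eq Int_commute Diff_eq)
  moreover have "card {A\<in>P. card A = 1} + card {A\<in>P. card A \<noteq> 1} = card P"
  proof -
    have "{A\<in>P. card A = 1} \<union> {A\<in>P. card A \<noteq> 1} = P" by blast
    moreover have "{A\<in>P. card A = 1} \<inter> {A\<in>P. card A \<noteq> 1} = {}" by blast
    ultimately show ?thesis using card_Un_disjoint[of "{A\<in>P. card A = 1}" "{A\<in>P. card A \<noteq> 1}"] finP
      by simp
  qed
  ultimately show ?thesis using s by linarith
qed

lemma div2_aux:
  fixes x y z :: nat
  assumes "x div 2 = z div 2" "y div 2 = z div 2" "x \<noteq> z" "y \<noteq> z"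
  shows "x = y"
proof -
  have ex: "x = 2 * (x div 2) + x mod 2" "y = 2 * (y div 2) + y mod 2" "z = 2 * (z div 2) + z mod 2" by simp_all
  have "x mod 2 = 0 \<or> x mod 2 = 1" "y mod 2 = 0 \<or> y mod 2 = 1" "z mod 2 = 0 \<or> z mod 2 = 1" by auto
  thus ?thesis using ex assms by auto
qed
lemma upper:
  assumes fin: "finite V" and cm: "complete_multipartite V E P"
  shows "\<exists>f. relaxed1_coloring V E
     (card {A\<in>P. card A \<noteq> 1} + (card {A\<in>P. card A = 1} + 1) div 2) f"
proof -
  note U = cm_facts(1)[OF cm] and ne = cm_facts(2)[OF cm]
    and uniq = cm_facts(3)[OF cm] and Eiff = cm_facts(4)[OF cm]
  have finP: "finite P" using fin U finite_UnionD by blast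
  have finA: "finite A" if "A \<in> P" for A using fin U that
    by (metis Union_upper finite_subset)
  have dj: "pairwise disjnt P" using cm unfolding complete_multipartite_def by blast
  define N where "N = {A\<in>P. card A \<noteq> 1}"
  define S where "S = {A\<in>P. card A = 1}"
  define UU where "UU = \<Union>S"
  have finN: "finite N" using finP N_def by simp
  have cardU: "card UU = card S"
  proof -
    have "card UU = sum card S" unfolding UU_def
      by (rule card_Union_disjoint) (use dj finA in \<open>auto simp: S_def pairwise_def\<close>)
    also have "\<dots> = card S" by (simp add: S_def)
    finally show ?thesis .
  qed
  have finU: "finite UU" unfolding UU_def S_def using finP finA by auto
  obtain g where g: "bij_betw g N {0..<card N}" using ex_bij_betw_finite_nat[OF finN] by blast
  obtain h where h: "bij_betw h UU {0..<card UU}" using ex_bij_betw_finite_nat[OF finU] by blast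
  define part where "part v = (THE A. A \<in> P \<and> v \<in> A)" for v
  have part_eq: "part v = A" if "A \<in> P" "v \<in> A" for v A
    unfolding part_def using that uniq by (intro the_equality) blast+
  have part_in: "part v \<in> P \<and> v \<in> part v" if H: "v \<in> V" for v
  proof -
    obtain A where "A \<in> P" "v \<in> A" using U H by blast
    thus ?thesis using part_eq by simp
  qed
  define f where "f v = (if v \<in> UU then card N + 1 + h v div 2 else g (part v) + 1)" for v
  define k where "k = card N + (card S + 1) div 2"
  have notU: "part v \<in> N" if "v \<in> V" "v \<notin> UU" for v
    using part_in[OF that(1)] that(2) unfolding N_def UU_def S_def by blast
  have fU: "f v > card N" if "v \<in> UU" for v using that f_def by simp
  have fN: "f v \<le> card N" if "v \<in> V" "v \<notin> UU" for v
  proof -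
    have "g (part v) < card N" using g notU[OF that] by (auto simp: bij_betw_def)
    thus ?thesis using that f_def by simp
  qed
  have range: "f v \<in> {1..k}" if "v \<in> V" for v
  proof (cases "v \<in> UU")
    case True
    hence "h v < card S" using h cardU by (auto simp: bij_betw_def)
    hence "1 + h v div 2 \<le> (card S + 1) div 2" by presburger
    thus ?thesis using True f_def k_def by simp
  next
    case False
    thus ?thesis using fN[OF that False] f_def k_def by simp
  qed
  have Epart: "part u \<noteq> part v \<and> u \<noteq> v" if H: "E u v" "u \<in> V" "v \<in> V" for u v
  proof -
    obtain A B where AB: "A\<in>P" "B\<in>P" "A\<noteq>B" "u\<in>A" "v\<in>B" using Eiff H(1) by blast
    have "part u = A" "part v = B" using part_eq AB by auto
    moreover have "u \<noteq> v" using uniq AB by blast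
    ultimately show ?thesis using AB by simp
  qed
  have colp: "v = w" if H: "u\<in>V" "v\<in>V" "w\<in>V" "E u v" "E u w" "f v = f u" "f w = f u" for u v w
  proof (cases "u \<in> UU")
    case True
    have vU: "v \<in> UU" using fU[OF True] fN[OF H(2)] H(6) by force
    have wU: "w \<in> UU" using fU[OF True] fN[OF H(3)] H(7) by force
    have d1: "h v div 2 = h u div 2" using H(6) vU True f_def by simp
    have d2: "h w div 2 = h u div 2" using H(7) wU True f_def by simp
    have inj: "inj_on h UU" using h bij_betw_def by blast
    have "h v \<noteq> h u" using Epart[OF H(4) H(1) H(2)] inj vU True by (metis inj_on_eq_iff)
    moreover have "h w \<noteq> h u" using Epart[OF H(5) H(1) H(3)] inj wU True by (metis inj_on_eq_iff)
    ultimately have "h v = h w" using d1 d2 div2_aux by metis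
    thus ?thesis using inj vU wU by (metis inj_on_eq_iff)
  next
    case False
    have vU: "v \<notin> UU" using fU fN[OF H(1) False] H(6) by force
    have "g (part v) = g (part u)" using H(6) vU False f_def by simp
    moreover have "inj_on g N" using g bij_betw_def by blast
    ultimately have "part v = part u" using notU[OF H(1) False] notU[OF H(2) vU] by (metis inj_on_eq_iff)
    thus ?thesis using Epart[OF H(4) H(1) H(2)] by simp
  qed
  have "relaxed1_coloring V E k f"
    unfolding relaxed1_coloring_def using range colp by blast
  thus ?thesis unfolding k_def N_def S_def by blast
qed

lemma ceil_half: "nat \<lceil>real r / 2\<rceil> = (r + 1) div 2"
proof -
  define m where "m = r div 2"
  have "r = 2*m \<or> r = 2*m+1" unfolding m_def by presburger
  thus ?thesis
  proof
    assume "r = 2*m" thus ?thesis by simp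
  next
    assume r: "r = 2*m+1"
    have "\<lceil>real r / 2\<rceil> = int m + 1"
      by (rule ceiling_unique) (simp_all add: r)
    thus ?thesis using r by simp
  qed
qed

theorem theorem4p3:
  fixes V :: "'a set" and E :: "'a \<Rightarrow> 'a \<Rightarrow> bool" and P :: "'a set set"
    and s r :: nat
  assumes "finite V"
    and "complete_multipartite V E P"
    and "card P = s" and "s \<ge> 2"
    and "card {A\<in>P. card A = 1} = r"
  shows "chi1 V E = s - r + nat \<lceil>real r / 2\<rceil>"
proof -
  have finP: "finite P" using assms(1,2) cm_facts(1) finite_UnionD by blast
  have rs: "r \<le> s" using assms(3,5) card_mono[OF finP, of "{A\<in>P. card A = 1}"] by auto
  have cN: "card {A\<in>P. card A \<noteq> 1} = s - r"
  proof -
    have "{A\<in>P. card A \<noteq> 1} = P - {A\<in>P. card A = 1}" by blast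
    thus ?thesis using card_Diff_subset[of "{A\<in>P. card A = 1}" P] finP assms(3,5) by auto
  qed
  show ?thesis
    unfolding chi1_def ceil_half
  proof (rule Least_equality)
    show "\<exists>f. relaxed1_coloring V E (s - r + (r + 1) div 2) f"
      using upper[OF assms(1,2)] cN assms(5) by simp
  next
    fix k assume "\<exists>f. relaxed1_coloring V E k f"
    then obtain f where "relaxed1_coloring V E k f" by blast
    from lower[OF assms(1,2) this] assms(3,5) have "2 * s - r \<le> 2 * k" by simp
    thus "s - r + (r + 1) div 2 \<le> k" using rs by presburger
  qed
qed

end
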